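(* Every dappled patch $G$ has a homomorphism (of dappled graphs) to the dappled triangular grid $\mathbf{T}$.
   Context: A patch is a connected plane graph all of whose faces, except possibly the outer face, have length three. A hued graph is a graph $G$ with a proper coloring $\psi_G:V(G)\to\mathbb{Z}_3$ (hue); a dappled graph is a hued graph $G$ with additionally a proper coloring $\varphi_G:V(G)\to\mathbb{Z}_2^2$ (color). A dappled patch is a patch that is a dappled graph. A homomorphism of dappled graphs $f:V(G)\to V(H)$ maps adjacent vertices to adjacent vertices and preserves both hue and color. The dappled triangular grid $\mathbf{T}$ has vertex set $\mathbb{Z}^2$, with $(i_1,j_1)$ and $(i_2,j_2)$ adjacent iff $(i_2-i_1,j_2-j_1)\in\{\pm(1,0),\pm(0,1),\pm(1,1)\}$, hue $(i+j)\bmod 3$ and color $(i\bmod 2,j\bmod 2)$ at vertex $(i,j)$. *)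

theory Defs
  imports Main "HOL-Library.Numeral_Type"
begin

definition simple_graph :: "'a set \<Rightarrow> ('a \<Rightarrow> 'a \<Rightarrow> bool) \<Rightarrow> bool" where
  "simple_graph V E \<longleftrightarrow> finite V \<and> (\<forall>u v. E u v \<longrightarrow> u \<in> V \<and> v \<in> V)
     \<and> (\<forall>u v. E u v \<longrightarrow> E v u) \<and> (\<forall>u. \<not> E u u)"

definition connected_graph :: "'a set \<Rightarrow> ('a \<Rightarrow> 'a \<Rightarrow> bool) \<Rightarrow> bool" where
  "connected_graph V E \<longleftrightarrow> V \<noteq> {} \<and> (\<forall>u\<in>V. \<forall>v\<in>V. E\<^sup>*\<^sup>* u v)"

text \<open>Combinatorial maps (rotation systems): darts are ordered pairs (u,v) with E u v;
  sigma cyclically permutes the darts leaving each vertex.\<close>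
definition darts :: "('a \<Rightarrow> 'a \<Rightarrow> bool) \<Rightarrow> ('a \<times> 'a) set" where
  "darts E = {(u, v). E u v}"

definition orb :: "('b \<Rightarrow> 'b) \<Rightarrow> 'b \<Rightarrow> 'b set" where
  "orb f x = {(f ^^ n) x | n. True}"

definition rotation_system :: "('a \<Rightarrow> 'a \<Rightarrow> bool) \<Rightarrow> ('a \<times> 'a \<Rightarrow> 'a \<times> 'a) \<Rightarrow> bool" where
  "rotation_system E \<sigma> \<longleftrightarrow> bij_betw \<sigma> (darts E) (darts E)
     \<and> (\<forall>d\<in>darts E. fst (\<sigma> d) = fst d)
     \<and> (\<forall>d\<in>darts E. \<forall>d'\<in>darts E. fst d = fst d' \<longrightarrow> d' \<in> orb \<sigma> d)"

text \<open>Face permutation: a face is traversed by reversing the dart and rotating.\<close>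
definition face_map :: "('a \<times> 'a \<Rightarrow> 'a \<times> 'a) \<Rightarrow> 'a \<times> 'a \<Rightarrow> 'a \<times> 'a" where
  "face_map \<sigma> d = \<sigma> (snd d, fst d)"

definition faces :: "('a \<Rightarrow> 'a \<Rightarrow> bool) \<Rightarrow> ('a \<times> 'a \<Rightarrow> 'a \<times> 'a) \<Rightarrow> ('a \<times> 'a) set set" where
  "faces E \<sigma> = {orb (face_map \<sigma>) d | d. d \<in> darts E}"

text \<open>A connected map is planar (genus 0) iff Euler's formula V - E + F = 2 holds
  (the edgeless one-vertex graph is trivially plane).\<close>
definition plane_map :: "'a set \<Rightarrow> ('a \<Rightarrow> 'a \<Rightarrow> bool) \<Rightarrow> ('a \<times> 'a \<Rightarrow> 'a \<times> 'a) \<Rightarrow> bool" where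
  "plane_map V E \<sigma> \<longleftrightarrow> rotation_system E \<sigma> \<and>
     (darts E = {} \<or>
      int (card V) - int (card (darts E)) div 2 + int (card (faces E \<sigma>)) = 2)"

text \<open>A patch: a connected plane graph all of whose faces, except possibly the outer
  face f0, have length three (face length = number of darts in the facial walk).\<close>
definition patch :: "'a set \<Rightarrow> ('a \<Rightarrow> 'a \<Rightarrow> bool) \<Rightarrow> bool" where
  "patch V E \<longleftrightarrow> simple_graph V E \<and> connected_graph V E \<and>
     (\<exists>\<sigma>. plane_map V E \<sigma> \<and> (\<exists>f0. \<forall>f\<in>faces E \<sigma>. f \<noteq> f0 \<longrightarrow> card f = 3))"

definition proper_coloring :: "'a set \<Rightarrow> ('a \<Rightarrow> 'a \<Rightarrow> bool) \<Rightarrow> ('a \<Rightarrow> 'c) \<Rightarrow> bool" where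
  "proper_coloring V E c \<longleftrightarrow> (\<forall>u v. E u v \<longrightarrow> c u \<noteq> c v)"

definition dappled :: "'a set \<Rightarrow> ('a \<Rightarrow> 'a \<Rightarrow> bool) \<Rightarrow> ('a \<Rightarrow> 3) \<Rightarrow> ('a \<Rightarrow> 2 \<times> 2) \<Rightarrow> bool" where
  "dappled V E \<psi> \<phi> \<longleftrightarrow> proper_coloring V E \<psi> \<and> proper_coloring V E \<phi>"

definition T_adj :: "int \<times> int \<Rightarrow> int \<times> int \<Rightarrow> bool" where
  "T_adj p q \<longleftrightarrow> (fst q - fst p, snd q - snd p) \<in>
     {(1,0), (-1,0), (0,1), (0,-1), (1,1), (-1,-1)}"

definition T_hue :: "int \<times> int \<Rightarrow> 3" where
  "T_hue p = of_int (fst p + snd p)"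

definition T_color :: "int \<times> int \<Rightarrow> 2 \<times> 2" where
  "T_color p = (of_int (fst p), of_int (snd p))"

definition dappled_hom_to_T ::
  "'a set \<Rightarrow> ('a \<Rightarrow> 'a \<Rightarrow> bool) \<Rightarrow> ('a \<Rightarrow> 3) \<Rightarrow> ('a \<Rightarrow> 2 \<times> 2) \<Rightarrow> ('a \<Rightarrow> int \<times> int) \<Rightarrow> bool" where
  "dappled_hom_to_T V E \<psi> \<phi> f \<longleftrightarrow>
     (\<forall>u v. E u v \<longrightarrow> T_adj (f u) (f v)) \<and>
     (\<forall>v\<in>V. T_hue (f v) = \<psi> v \<and> T_color (f v) = \<phi> v)"

end

theory Submission imports Defs "HOL-Library.Function_Algebras" Complex_Main begin

lemma orb_iff: "y \<in> orb f x \<longleftrightarrow> (\<exists>n. y = (f ^^ n) x)"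
  by (auto simp: orb_def)

lemma orb_self: "x \<in> orb f x"
  unfolding orb_iff by (rule exI[of _ 0]) simp

lemma orb_step: "f x \<in> orb f x"
  unfolding orb_iff by (rule exI[of _ 1]) simp

lemma orb_trans: "x \<in> orb f y \<Longrightarrow> orb f x \<subseteq> orb f y"
proof
  fix z assume "x \<in> orb f y" "z \<in> orb f x"
  then obtain n m where "x = (f ^^ n) y" "z = (f ^^ m) x" by (auto simp: orb_iff)
  then have "z = (f ^^ (m + n)) y" by (simp add: funpow_add)
  then show "z \<in> orb f y" by (auto simp: orb_iff)
qed

lemma funpow_in: "f ` D \<subseteq> D \<Longrightarrow> x \<in> D \<Longrightarrow> (f ^^ n) x \<in> D"
  by (induct n) auto

lemma orb_subset: "f ` D \<subseteq> D \<Longrightarrow> x \<in> D \<Longrightarrow> orb f x \<subseteq> D"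
  using funpow_in by (auto simp: orb_iff)

lemma funpow_cancel:
  assumes "bij_betw f D D" "x \<in> D" "(f ^^ i) x = (f ^^ j) x" "i \<le> j"
  shows "(f ^^ (j - i)) x = x"
proof -
  have fD: "f ` D \<subseteq> D" using assms(1) by (auto simp: bij_betw_def)
  have "(f ^^ j) x = (f ^^ i) ((f ^^ (j - i)) x)"
    using assms(4) by (metis funpow_add le_add_diff_inverse comp_apply)
  moreover have "inj_on (f ^^ i) D" using bij_betw_funpow[OF assms(1)] by (auto simp: bij_betw_def)
  ultimately show ?thesis using assms(2,3) funpow_in[OF fD] by (metis inj_onD)
qed

lemma funpow_mod:
  assumes "(f ^^ m) x = x"
  shows "(f ^^ n) x = (f ^^ (n mod m)) x"
proof -
  have pm: "(f ^^ (m * q)) x = x" for q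
  proof (induct q)
    case (Suc q)
    have "(f ^^ (m * Suc q)) x = (f ^^ m) ((f ^^ (m * q)) x)"
      by (metis add.commute comp_apply funpow_add mult_Suc_right)
    then show ?case using Suc assms(1) by simp
  qed simp
  have "(f ^^ n) x = (f ^^ (n mod m)) ((f ^^ (m * (n div m))) x)"
    by (metis comp_apply funpow_add mod_mult_div_eq)
  then show ?thesis using pm by simp
qed

lemma orb_period:
  assumes "(f ^^ m) x = x" "m > 0"
  shows "orb f x = (\<lambda>k. (f ^^ k) x) ` {..<m}"
proof
  show "orb f x \<subseteq> (\<lambda>k. (f ^^ k) x) ` {..<m}"
  proof
    fix y assume "y \<in> orb f x"
    then obtain n where "y = (f ^^ n) x" by (auto simp: orb_iff)
    then have "y = (f ^^ (n mod m)) x" using funpow_mod[OF assms(1)] by simp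
    then show "y \<in> (\<lambda>k. (f ^^ k) x) ` {..<m}" using assms(2) by auto
  qed
qed (auto simp: orb_iff)

lemma period_exists:
  assumes "bij_betw f D D" "finite D" "x \<in> D"
  shows "\<exists>n>0. (f ^^ n) x = x"
proof -
  have fD: "f ` D \<subseteq> D" using assms(1) by (auto simp: bij_betw_def)
  let ?g = "\<lambda>k. (f ^^ k) x"
  have "?g ` {..card D} \<subseteq> D" using funpow_in[OF fD assms(3)] by auto
  then have "\<not> inj_on ?g {..card D}"
    using card_inj_on_le[of ?g "{..card D}" D] assms(2) by auto
  then obtain i j where ij: "i \<le> card D" "j \<le> card D" "i \<noteq> j" "?g i = ?g j"
    by (auto simp: inj_on_def)
  show ?thesis
  proof (cases "i < j")
    case True
    then show ?thesis using funpow_cancel[OF assms(1,3) ij(4)] by (intro exI[of _ "j - i"]) auto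
  next
    case False
    then show ?thesis using funpow_cancel[OF assms(1,3) ij(4)[symmetric]] ij(3)
      by (intro exI[of _ "i - j"]) auto
  qed
qed

lemma orb_sym:
  assumes "bij_betw f D D" "finite D" "x \<in> D" "y \<in> orb f x"
  shows "x \<in> orb f y"
proof -
  obtain n where n: "n > 0" "(f ^^ n) x = x" using period_exists[OF assms(1-3)] by auto
  obtain k where k: "y = (f ^^ k) x" using assms(4) by (auto simp: orb_iff)
  have "(f ^^ (n - k mod n)) y = (f ^^ (n - k mod n + k)) x" using k by (simp add: funpow_add)
  also have "\<dots> = x"
  proof -
    have "(n - k mod n + k) mod n = 0" using n(1)
      by (metis add.commute add_diff_inverse_nat le_add_diff_inverse mod_add_right_eq mod_le_divisor mod_self not_less)
    then show ?thesis using funpow_mod[OF n(2), of "n - k mod n + k"] by simp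
  qed
  finally show ?thesis by (auto simp: orb_iff)
qed

lemma orb_eq:
  assumes "bij_betw f D D" "finite D" "x \<in> D" "y \<in> orb f x"
  shows "orb f y = orb f x"
  using orb_trans[OF assms(4)] orb_trans[OF orb_sym[OF assms]] by blast

lemma orb_tri:
  assumes "bij_betw f D D" "finite D" "x \<in> D" "card (orb f x) = 3"
  shows "(f ^^ 3) x = x \<and> orb f x = {x, f x, f (f x)} \<and> x \<noteq> f x \<and> x \<noteq> f (f x) \<and> f x \<noteq> f (f x)"
proof -
  have fD: "f ` D \<subseteq> D" using assms(1) by (auto simp: bij_betw_def)
  have fin: "finite (orb f x)" using orb_subset[OF fD assms(3)] assms(2) finite_subset by blast
  let ?g = "\<lambda>k. (f ^^ k) x"
  have "?g ` {..3} \<subseteq> orb f x" by (auto simp: orb_iff)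
  then have "\<not> inj_on ?g {..3}"
    using card_inj_on_le[of ?g "{..3}" "orb f x"] assms(4) fin by auto
  then obtain i j where ij: "i \<le> 3" "j \<le> 3" "i < j" "?g i = ?g j"
    by (auto simp: inj_on_def) (metis linorder_neqE_nat)
  define m where "m = j - i"
  have m: "(f ^^ m) x = x" "m > 0" "m \<le> 3" using funpow_cancel[OF assms(1,3) ij(4)] ij by (auto simp: m_def)
  have cm: "card (orb f x) \<le> m" using orb_period[OF m(1,2)] card_image_le[of "{..<m}" ?g] by simp
  then have m3: "m = 3" using assms(4) m(3) by simp
  have o3: "orb f x = ?g ` {..<3}" using orb_period[OF m(1,2)] m3 by simp
  have lt: "{..<3::nat} = {0,1,2}" by auto
  have o3': "orb f x = {x, f x, f (f x)}" using o3 unfolding lt by (simp add: numeral_2_eq_2)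
  have "inj_on ?g {..<3}" using o3 assms(4) by (intro eq_card_imp_inj_on) auto
  then have inj: "inj_on ?g {0,1,2}" unfolding lt .
  have "?g 0 \<noteq> ?g 1" using inj_onD[OF inj, of 0 1] by auto
  moreover have "?g 0 \<noteq> ?g 2" using inj_onD[OF inj, of 0 2] by auto
  moreover have "?g 1 \<noteq> ?g 2" using inj_onD[OF inj, of 1 2] by auto
  ultimately have "?g 0 \<noteq> ?g 1 \<and> ?g 0 \<noteq> ?g 2 \<and> ?g 1 \<noteq> ?g 2" by blast
  then show ?thesis using m(1) m3 o3' by (simp add: numeral_2_eq_2)
qed


lemma sg_D: assumes "simple_graph V E"
  shows "finite (darts E)" "darts E \<subseteq> V \<times> V" "\<And>u v. (u,v) \<in> darts E \<Longrightarrow> (v,u) \<in> darts E"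
    "\<And>u v. (u,v) \<in> darts E \<Longrightarrow> u \<noteq> v"
proof -
  show sub: "darts E \<subseteq> V \<times> V" using assms by (auto simp: simple_graph_def darts_def)
  then show "finite (darts E)" using assms by (auto simp: simple_graph_def intro: finite_subset)
  show "\<And>u v. (u,v) \<in> darts E \<Longrightarrow> (v,u) \<in> darts E" using assms by (auto simp: simple_graph_def darts_def)
  show "\<And>u v. (u,v) \<in> darts E \<Longrightarrow> u \<noteq> v" using assms by (auto simp: simple_graph_def darts_def)
qed

lemma face_map_simp: "face_map \<sigma> (u,v) = \<sigma> (v,u)"
  by (simp add: face_map_def)

lemma rs_basic:
  assumes "simple_graph V E" "rotation_system E \<sigma>"
  shows "bij_betw (face_map \<sigma>) (darts E) (darts E)"
    "\<And>d. d \<in> darts E \<Longrightarrow> fst (face_map \<sigma> d) = snd d"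
    "\<And>d. d \<in> darts E \<Longrightarrow> face_map \<sigma> d \<in> darts E"
proof -
  have b: "bij_betw \<sigma> (darts E) (darts E)" and f: "\<forall>d\<in>darts E. fst (\<sigma> d) = fst d"
    using assms(2) by (auto simp: rotation_system_def)
  have sw: "bij_betw (\<lambda>d. (snd d, fst d)) (darts E) (darts E)"
    using sg_D(3)[OF assms(1)] by (auto simp: bij_betw_def inj_on_def image_def) (metis fst_conv snd_conv)
  have "face_map \<sigma> = \<sigma> \<circ> (\<lambda>d. (snd d, fst d))" by (auto simp: face_map_def fun_eq_iff)
  then show bf: "bij_betw (face_map \<sigma>) (darts E) (darts E)" using bij_betw_trans[OF sw b] by simp
  show "\<And>d. d \<in> darts E \<Longrightarrow> fst (face_map \<sigma> d) = snd d"
    using f sg_D(3)[OF assms(1)] by (auto simp: face_map_def)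
  show "\<And>d. d \<in> darts E \<Longrightarrow> face_map \<sigma> d \<in> darts E" using bf by (auto simp: bij_betw_def)
qed

lemma face_mem:
  assumes "simple_graph V E" "rotation_system E \<sigma>" "g \<in> faces E \<sigma>" "d \<in> darts E"
  shows "d \<in> g \<longleftrightarrow> g = orb (face_map \<sigma>) d"
proof -
  obtain d0 where d0: "d0 \<in> darts E" "g = orb (face_map \<sigma>) d0" using assms(3) by (auto simp: faces_def)
  note bf = rs_basic(1)[OF assms(1,2)]
  show ?thesis using orb_eq[OF bf sg_D(1)[OF assms(1)] d0(1)] d0(2) orb_self by metis
qed

lemma face_sub:
  assumes "simple_graph V E" "rotation_system E \<sigma>" "g \<in> faces E \<sigma>"
  shows "g \<subseteq> darts E" "finite g"
proof -
  obtain d0 where d0: "d0 \<in> darts E" "g = orb (face_map \<sigma>) d0" using assms(3) by (auto simp: faces_def)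
  note bf = rs_basic(1)[OF assms(1,2)]
  show "g \<subseteq> darts E" using orb_subset[of "face_map \<sigma>" "darts E" d0] bf d0 by (auto simp: bij_betw_def)
  then show "finite g" using sg_D(1)[OF assms(1)] finite_subset by blast
qed

lemma dual_conn:
  assumes sg: "simple_graph V E" and cg: "connected_graph V E" and rs: "rotation_system E \<sigma>"
    and f0: "f0 \<in> faces E \<sigma>" and Q0: "Q f0"
    and cl: "\<And>u v. E u v \<Longrightarrow> Q (orb (face_map \<sigma>) (u,v)) \<Longrightarrow> Q (orb (face_map \<sigma>) (v,u))"
  shows "\<forall>g\<in>faces E \<sigma>. Q g"
proof -
  let ?D = "darts E" and ?p = "face_map \<sigma>"
  define S where "S = {d \<in> ?D. Q (orb ?p d)}"
  note bf = rs_basic(1)[OF sg rs]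
  have finD: "finite ?D" using sg_D(1)[OF sg] .
  have sb: "bij_betw \<sigma> ?D ?D" and sf: "\<forall>d\<in>?D. fst (\<sigma> d) = fst d"
    and so: "\<forall>d\<in>?D. \<forall>d'\<in>?D. fst d = fst d' \<longrightarrow> d' \<in> orb \<sigma> d"
    using rs by (auto simp: rotation_system_def)
  have a: "?p d \<in> S" if "d \<in> S" for d
  proof -
    have dD: "d \<in> ?D" using that by (auto simp: S_def)
    have "orb ?p (?p d) = orb ?p d" using orb_eq[OF bf finD dD orb_step] .
    then show ?thesis using that rs_basic(3)[OF sg rs dD] by (auto simp: S_def)
  qed
  have b: "(snd d, fst d) \<in> S" if "d \<in> S" for d
    using that cl sg_D(3)[OF sg] by (cases d) (auto simp: S_def darts_def)
  have c: "\<sigma> d \<in> S" if "d \<in> S" for d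
    using a[OF b[OF that]] by (simp add: face_map_def)
  have dn: "(\<sigma> ^^ n) d \<in> S" if "d \<in> S" for d n
    using that by (induct n) (auto intro: c)
  have e: "d' \<in> S" if "d \<in> S" "d' \<in> ?D" "fst d' = fst d" for d d'
  proof -
    have "d' \<in> orb \<sigma> d" using so that by (auto simp: S_def)
    then show ?thesis using dn[OF that(1)] by (auto simp: orb_iff)
  qed
  obtain d0 where d0: "d0 \<in> ?D" "f0 = orb ?p d0" using f0 by (auto simp: faces_def)
  have d0S: "d0 \<in> S" using d0 Q0 by (auto simp: S_def)
  have u0V: "fst d0 \<in> V" using sg_D(2)[OF sg] d0(1) by auto
  have all: "\<forall>d\<in>?D. fst d = v \<longrightarrow> d \<in> S" if "v \<in> V" for v
  proof -
    have "E\<^sup>*\<^sup>* (fst d0) v" using cg u0V that by (auto simp: connected_graph_def)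
    then show ?thesis
    proof (induct rule: rtranclp_induct)
      case base
      then show ?case using e[OF d0S] by auto
    next
      case (step y z)
      have "(y, z) \<in> ?D" using step(2) by (auto simp: darts_def)
      then have "(y,z) \<in> S" using step(3) by auto
      then have "(z,y) \<in> S" using b by fastforce
      then show ?case using e by fastforce
    qed
  qed
  show ?thesis
  proof
    fix g assume "g \<in> faces E \<sigma>"
    then obtain d where d: "d \<in> ?D" "g = orb ?p d" by (auto simp: faces_def)
    have "fst d \<in> V" using sg_D(2)[OF sg] d(1) by auto
    then have "d \<in> S" using all d(1) by auto
    then show "Q g" using d by (auto simp: S_def)
  qed
qed

global_interpretation FV: vector_space "\<lambda>(c::real) (f::'b \<Rightarrow> real) x. c * f x"
  by unfold_locales (auto simp: fun_eq_iff algebra_simps)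

lemma sum_fun_apply: "(sum f A) x = (\<Sum>a\<in>A. f a x)"
  by (induct A rule: infinite_finite_induct) auto

lemma family_bound:
  fixes X :: "'i \<Rightarrow> 'b \<Rightarrow> real"
  assumes fI: "finite I" and fT: "finite T" and sp: "\<And>i. i \<in> I \<Longrightarrow> X i \<in> FV.span T"
    and indep: "\<And>c. (\<And>d. (\<Sum>i\<in>I. c i * X i d) = 0) \<Longrightarrow> (\<forall>i\<in>I. c i = 0)"
  shows "card I \<le> card T"
proof -
  have inj: "inj_on X I"
  proof (rule inj_onI, rule ccontr)
    fix i j assume ij: "i \<in> I" "j \<in> I" "X i = X j" "i \<noteq> j"
    define c where "c k = (if k = i then 1 else if k = j then -1 else (0::real))" for k
    have "(\<Sum>k\<in>I. c k * X k d) = 0" for d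
    proof -
      have "(\<Sum>k\<in>I. c k * X k d) = (\<Sum>k\<in>I. (if k = i then X i d else 0) + (if k = j then - X j d else 0))"
        using ij by (intro sum.cong) (auto simp: c_def)
      also have "\<dots> = X i d - X j d" using ij fI by (simp add: sum.distrib)
      finally show ?thesis using ij by simp
    qed
    then have "c i = 0" using indep ij by blast
    then show False by (simp add: c_def)
  qed
  have "FV.independent (X ` I)"
  proof (rule FV.independent_if_scalars_zero)
    show "finite (X ` I)" using fI by simp
    fix f x assume s: "(\<Sum>x\<in>X ` I. (\<lambda>y. f x * x y)) = 0" and x: "x \<in> X ` I"
    have "(\<Sum>i\<in>I. f (X i) * X i d) = 0" for d
    proof -
      have "(\<Sum>x\<in>X ` I. (\<lambda>y. f x * x y)) d = 0" using s by simp
      then show ?thesis by (simp add: sum_fun_apply sum.reindex[OF inj])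
    qed
    then have "\<forall>i\<in>I. f (X i) = 0" using indep[of "\<lambda>i. f (X i)"] by blast
    then show "f x = 0" using x by auto
  qed
  moreover have "X ` I \<subseteq> FV.span T" using sp by auto
  ultimately have "card (X ` I) \<le> card T" using FV.independent_span_bound[OF fT] by blast
  then show ?thesis using card_image[OF inj] by simp
qed

lemma span_anti:
  fixes Dp D :: "('a \<times> 'a) set" and y :: "'a \<times> 'a \<Rightarrow> real"
  defines "ev \<equiv> \<lambda>d x. if x = d then 1 else if x = (snd d, fst d) then -1 else (0::real)"
  assumes fD: "finite D" and DpD: "Dp \<subseteq> D"
    and symD: "\<And>u v. (u,v) \<in> D \<Longrightarrow> (v,u) \<in> D"
    and irr: "\<And>u v. (u,v) \<in> D \<Longrightarrow> u \<noteq> v"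
    and one: "\<And>u v. (u,v) \<in> D \<Longrightarrow> (u,v) \<in> Dp \<or> (v,u) \<in> Dp"
    and notboth: "\<And>u v. (u,v) \<in> Dp \<Longrightarrow> (v,u) \<notin> Dp"
    and y0: "\<And>x. x \<notin> D \<Longrightarrow> y x = 0"
    and ya: "\<And>u v. (u,v) \<in> D \<Longrightarrow> y (v,u) = - y (u,v)"
  shows "y \<in> FV.span (ev ` Dp)"
proof -
  have fDp: "finite Dp" using fD DpD finite_subset by blast
  have eq: "y = (\<Sum>d\<in>Dp. (\<lambda>x. y d * ev d x))"
  proof
    fix x :: "'a \<times> 'a"
    obtain u v where x: "x = (u,v)" by (cases x)
    have "(\<Sum>d\<in>Dp. (\<lambda>x. y d * ev d x)) x = (\<Sum>d\<in>Dp. y d * ev d x)" by (simp add: sum_fun_apply)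
    also have "\<dots> = y x"
    proof (cases "x \<in> D")
      case True
      have uv: "u \<noteq> v" using irr True x by auto
      have "(\<Sum>d\<in>Dp. y d * ev d x) = (\<Sum>d\<in>Dp. (if d = (u,v) then y d else 0) + (if d = (v,u) then - y d else 0))"
        using uv by (intro sum.cong) (auto simp: ev_def x)
      also have "\<dots> = (if (u,v) \<in> Dp then y (u,v) else 0) + (if (v,u) \<in> Dp then - y (v,u) else 0)"
        using fDp by (simp add: sum.distrib)
      also have "\<dots> = y x" using one[of u v] notboth[of u v] True x ya[of u v] by auto
      finally show ?thesis .
    next
      case False
      have "(\<Sum>d\<in>Dp. y d * ev d x) = 0"
      proof (intro sum.neutral ballI)
        fix d assume "d \<in> Dp"
        then have "d \<in> D" "(snd d, fst d) \<in> D" using DpD symD[of "fst d" "snd d"] by auto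
        then show "y d * ev d x = 0" using False by (auto simp: ev_def)
      qed
      then show ?thesis using y0[OF False] by simp
    qed
    finally show "y x = (\<Sum>d\<in>Dp. (\<lambda>x. y d * ev d x)) x" by simp
  qed
  have "(\<Sum>d\<in>Dp. (\<lambda>x. y d * ev d x)) \<in> FV.span (ev ` Dp)"
    by (intro FV.span_sum FV.span_scale FV.span_base) auto
  then show ?thesis using eq by simp
qed

lemma core:
  fixes h :: "'a \<times> 'a \<Rightarrow> real" and V :: "'a set"
  assumes sg: "simple_graph V E" and cg: "connected_graph V E" and rs: "rotation_system E \<sigma>"
    and eul: "int (card V) - int (card (darts E)) div 2 + int (card (faces E \<sigma>)) = 2"
    and f0: "f0 \<in> faces E \<sigma>"
    and anti: "\<And>u v. E u v \<Longrightarrow> h (v,u) = - h (u,v)"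
    and fs: "\<And>g. g \<in> faces E \<sigma> \<Longrightarrow> g \<noteq> f0 \<Longrightarrow> (\<Sum>d\<in>g. h d) = 0"
  shows "\<exists>p. \<forall>u v. E u v \<longrightarrow> h (u,v) = p v - p u"
proof (rule ccontr)
  assume nop: "\<not> ?thesis"
  let ?D = "darts E" and ?F = "faces E \<sigma>" and ?p = "face_map \<sigma>"
  note finD = sg_D(1)[OF sg] and DV = sg_D(2)[OF sg] and symD = sg_D(3)[OF sg] and irr = sg_D(4)[OF sg]
  note bf = rs_basic(1)[OF sg rs]
  have finV: "finite V" using sg by (simp add: simple_graph_def)
  have Fimg: "?F = (\<lambda>d. orb ?p d) ` ?D" by (auto simp: faces_def)
  have finF: "finite ?F" using Fimg finD by simp
  obtain v0 where v0: "v0 \<in> V" using cg by (auto simp: connected_graph_def)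
  obtain idx :: "'a \<Rightarrow> nat" where inj: "inj_on idx V"
    using finite_imp_inj_to_nat_seg[OF finV] by blast
  define Dp where "Dp = {d \<in> ?D. idx (fst d) < idx (snd d)}"
  have DpD: "Dp \<subseteq> ?D" by (auto simp: Dp_def)
  have one: "(u,v) \<in> Dp \<or> (v,u) \<in> Dp" if "(u,v) \<in> ?D" for u v
  proof -
    have "u \<in> V" "v \<in> V" "u \<noteq> v" using that DV irr by auto
    then have "idx u \<noteq> idx v" using inj by (auto simp: inj_on_def)
    then show ?thesis using that symD by (auto simp: Dp_def)
  qed
  have notboth: "(v,u) \<notin> Dp" if "(u,v) \<in> Dp" for u v using that by (auto simp: Dp_def)
  have cardD: "card ?D = 2 * card Dp"
  proof -
    let ?s = "\<lambda>d::'a\<times>'a. (snd d, fst d)"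
    have "?D = Dp \<union> ?s ` Dp"
    proof
      show "?D \<subseteq> Dp \<union> ?s ` Dp"
      proof
        fix d assume "d \<in> ?D"
        then have "d \<in> Dp \<or> (snd d, fst d) \<in> Dp" using one[of "fst d" "snd d"] by simp
        then show "d \<in> Dp \<union> ?s ` Dp"
        proof
          assume "(snd d, fst d) \<in> Dp"
          moreover have "d = ?s (snd d, fst d)" by simp
          ultimately show ?thesis by blast
        qed simp
      qed
      show "Dp \<union> ?s ` Dp \<subseteq> ?D" using DpD symD by auto
    qed
    moreover have "Dp \<inter> ?s ` Dp = {}" using notboth by auto
    moreover have "card (?s ` Dp) = card Dp" by (rule card_image) (auto simp: inj_on_def)
    moreover have "finite Dp" using finD DpD finite_subset by blast
    ultimately show ?thesis by (simp add: card_Un_disjoint)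
  qed
  define ev :: "'a \<times> 'a \<Rightarrow> 'a \<times> 'a \<Rightarrow> real" where "ev = (\<lambda>d x. if x = d then 1 else if x = (snd d, fst d) then -1 else (0::real))"
  define T where "T = ev ` Dp"
  have cardT: "card T \<le> card Dp" unfolding T_def by (rule card_image_le) (use finD DpD finite_subset in blast)
  have finT: "finite T" unfolding T_def using finD DpD finite_subset by blast
  have inspan: "y \<in> FV.span T" if "\<And>x. x \<notin> ?D \<Longrightarrow> y x = 0" "\<And>u v. (u,v) \<in> ?D \<Longrightarrow> y (v,u) = - y (u,v)" for y
    unfolding T_def ev_def
    by (rule span_anti[of ?D Dp y, OF finD DpD symD irr one notboth that(1) that(2)])
  have ev_span: "ev d \<in> FV.span T" if "d \<in> ?D" for d
  proof (cases "d \<in> Dp")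
    case True
    then show ?thesis unfolding T_def by (intro FV.span_base) auto
  next
    case False
    obtain u v where d: "d = (u,v)" by (cases d)
    then have vu: "(v,u) \<in> Dp" using one that False by auto
    have "ev d = - ev (v,u)" using irr that d by (auto simp: ev_def fun_eq_iff)
    moreover have "ev (v,u) \<in> FV.span T" unfolding T_def using vu by (intro FV.span_base) auto
    ultimately show ?thesis using FV.span_neg by fastforce
  qed
  have ev_face: "(\<Sum>x\<in>g. ev d x) = (if g = orb ?p d then 1 else 0) - (if g = orb ?p (snd d, fst d) then 1 else 0)"
    if g: "g \<in> ?F" and d: "d \<in> ?D" for g d
  proof -
    have d': "(snd d, fst d) \<in> ?D" using symD[of "fst d" "snd d"] d by simp
    have ne: "(snd d, fst d) \<noteq> d" using irr[of "fst d" "snd d"] d by (cases d) auto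
    have fg: "finite g" using face_sub[OF sg rs g] by simp
    have "(\<Sum>x\<in>g. ev d x) = (\<Sum>x\<in>g. (if x = d then 1 else 0) - (if x = (snd d, fst d) then 1 else 0))"
      using ne by (intro sum.cong) (auto simp: ev_def)
    also have "\<dots> = (if d \<in> g then 1 else 0) - (if (snd d, fst d) \<in> g then 1 else 0)"
      using fg by (simp add: sum_subtractf)
    finally show ?thesis using face_mem[OF sg rs g d] face_mem[OF sg rs g d'] by simp
  qed
  define dl where "dl = (\<lambda>q::'a \<Rightarrow> real. \<lambda>d. if d \<in> ?D then q (snd d) - q (fst d) else 0)"
  have dl_face: "(\<Sum>x\<in>g. dl q x) = 0" if g: "g \<in> ?F" for g q
  proof -
    obtain d0 where d0: "d0 \<in> ?D" "g = orb ?p d0" using g by (auto simp: faces_def)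
    have gD: "g \<subseteq> ?D" and fg: "finite g" using face_sub[OF sg rs g] by auto
    have "?p ` g \<subseteq> g" using orb_trans orb_step d0(2) by fastforce
    moreover have ij: "inj_on ?p g" using bf gD by (auto simp: bij_betw_def intro: inj_on_subset)
    ultimately have pg: "?p ` g = g" using endo_inj_surj fg by blast
    have "(\<Sum>x\<in>g. q (fst x)) = (\<Sum>x\<in>?p ` g. q (fst x))" using pg by simp
    also have "\<dots> = (\<Sum>x\<in>g. q (fst (?p x)))" by (simp add: sum.reindex[OF ij])
    also have "\<dots> = (\<Sum>x\<in>g. q (snd x))" using rs_basic(2)[OF sg rs] gD by (intro sum.cong) auto
    finally have "(\<Sum>x\<in>g. q (fst x)) = (\<Sum>x\<in>g. q (snd x))" .
    moreover have "(\<Sum>x\<in>g. dl q x) = (\<Sum>x\<in>g. q (snd x) - q (fst x))" using gD by (intro sum.cong) (auto simp: dl_def)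
    ultimately show ?thesis by (simp add: sum_subtractf)
  qed
  have dl_span: "dl q \<in> FV.span T" for q
  proof (rule inspan)
    fix u v assume "(u,v) \<in> ?D"
    then show "dl q (v,u) = - dl q (u,v)" using symD[of u v] by (simp add: dl_def)
  qed (simp add: dl_def)
  define hv :: "'a \<times> 'a \<Rightarrow> real" where "hv = (\<lambda>d. if d \<in> ?D then h d else 0)"
  have hv_span: "hv \<in> FV.span T"
  proof (rule inspan)
    fix u v assume "(u,v) \<in> ?D"
    then show "hv (v,u) = - hv (u,v)" using symD[of u v] anti[of u v] by (simp add: hv_def darts_def)
  qed (simp add: hv_def)
  have hv_face: "(\<Sum>x\<in>g. hv x) = 0" if "g \<in> ?F" "g \<noteq> f0" for g
  proof -
    have "g \<subseteq> ?D" using face_sub[OF sg rs that(1)] by simp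
    then have "(\<Sum>x\<in>g. hv x) = (\<Sum>x\<in>g. h x)" by (intro sum.cong) (auto simp: hv_def)
    then show ?thesis using fs[OF that] by simp
  qed
  have Qall: "\<forall>f\<in>?F. \<exists>w\<in>FV.span T. \<forall>g\<in>?F. (\<Sum>x\<in>g. w x) = (if g = f then 1 else 0) - (if g = f0 then 1 else 0)"
  proof (rule dual_conn[OF sg cg rs f0])
    show "\<exists>w\<in>FV.span T. \<forall>g\<in>?F. (\<Sum>x\<in>g. w x) = (if g = f0 then 1 else 0) - (if g = f0 then 1 else 0)"
      by (rule bexI[of _ 0]) (auto simp: FV.span_zero)
  next
    fix u v assume uv: "E u v"
      and "\<exists>w\<in>FV.span T. \<forall>g\<in>?F. (\<Sum>x\<in>g. w x) = (if g = orb ?p (u,v) then 1 else 0) - (if g = f0 then 1 else 0)"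
    then obtain w where w: "w \<in> FV.span T" "\<forall>g\<in>?F. (\<Sum>x\<in>g. w x) = (if g = orb ?p (u,v) then 1 else 0) - (if g = f0 then 1 else 0)"
      by blast
    have d: "(u,v) \<in> ?D" using uv by (simp add: darts_def)
    show "\<exists>w\<in>FV.span T. \<forall>g\<in>?F. (\<Sum>x\<in>g. w x) = (if g = orb ?p (v,u) then 1 else 0) - (if g = f0 then 1 else 0)"
    proof (rule bexI[of _ "w - ev (u,v)"])
      show "w - ev (u,v) \<in> FV.span T" using FV.span_diff[OF w(1) ev_span[OF d]] .
      show "\<forall>g\<in>?F. (\<Sum>x\<in>g. (w - ev (u,v)) x) = (if g = orb ?p (v,u) then 1 else 0) - (if g = f0 then 1 else 0)"
      proof
        fix g assume g: "g \<in> ?F"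
        have "(\<Sum>x\<in>g. (w - ev (u,v)) x) = (\<Sum>x\<in>g. w x) - (\<Sum>x\<in>g. ev (u,v) x)" by (simp add: sum_subtractf)
        then show "(\<Sum>x\<in>g. (w - ev (u,v)) x) = (if g = orb ?p (v,u) then 1 else 0) - (if g = f0 then 1 else 0)"
          using w(2) g ev_face[OF g d] by simp
      qed
    qed
  qed
  then obtain W where W: "\<And>f. f \<in> ?F \<Longrightarrow> W f \<in> FV.span T"
     "\<And>f g. f \<in> ?F \<Longrightarrow> g \<in> ?F \<Longrightarrow> (\<Sum>x\<in>g. W f x) = (if g = f then 1 else 0) - (if g = f0 then 1 else 0)"
    by metis
  define I :: "('a + ('a \<times> 'a) set) option set"
    where "I = Some ` Inl ` (V - {v0}) \<union> insert None (Some ` Inr ` (?F - {f0}))"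
  define X where "X i = (case i of None \<Rightarrow> hv | Some (Inl v) \<Rightarrow> dl (\<lambda>u. if u = v then 1 else 0) | Some (Inr f) \<Rightarrow> W f)" for i
  have finI: "finite I" using finV finF by (simp add: I_def)
  have split: "(\<Sum>i\<in>I. G i) = G None + (\<Sum>v\<in>V-{v0}. G (Some (Inl v))) + (\<Sum>f\<in>?F-{f0}. G (Some (Inr f)))"
    for G :: "('a + ('a \<times> 'a) set) option \<Rightarrow> real"
  proof -
    have "(\<Sum>i\<in>I. G i) = (\<Sum>i\<in>Some ` Inl ` (V - {v0}). G i) + (\<Sum>i\<in>insert None (Some ` Inr ` (?F - {f0})). G i)"
      unfolding I_def using finV finF by (intro sum.union_disjoint) auto
    also have "(\<Sum>i\<in>Some ` Inl ` (V - {v0}). G i) = (\<Sum>v\<in>V-{v0}. G (Some (Inl v)))"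
      unfolding image_image by (subst sum.reindex) (auto simp: inj_on_def)
    also have "(\<Sum>i\<in>insert None (Some ` Inr ` (?F - {f0})). G i) = G None + (\<Sum>i\<in>Some ` Inr ` (?F - {f0}). G i)"
      using finF by (subst sum.insert) auto
    also have "(\<Sum>i\<in>Some ` Inr ` (?F - {f0}). G i) = (\<Sum>f\<in>?F-{f0}. G (Some (Inr f)))"
      unfolding image_image by (subst sum.reindex) (auto simp: inj_on_def)
    finally show ?thesis by simp
  qed
  have cardI: "card I = (card V - 1) + 1 + (card ?F - 1)"
  proof -
    define I1 :: "('a + ('a \<times> 'a) set) option set" where "I1 = Some ` Inl ` (V - {v0})"
    define I2 :: "('a + ('a \<times> 'a) set) option set" where "I2 = Some ` Inr ` (?F - {f0})"
    have "I = I1 \<union> insert None I2" by (simp add: I_def I1_def I2_def)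
    moreover have "card I1 = card (V - {v0})"
      unfolding I1_def image_image by (subst card_image) (auto simp: inj_on_def)
    moreover have "card I2 = card (?F - {f0})"
      unfolding I2_def image_image by (subst card_image) (auto simp: inj_on_def)
    moreover have "I1 \<inter> insert None I2 = {}" "None \<notin> I2" by (auto simp: I1_def I2_def)
    moreover have "finite I1" "finite I2" using finV finF by (auto simp: I1_def I2_def)
    ultimately have "card I = card (V - {v0}) + (1 + card (?F - {f0}))"
      by (simp add: card_Un_disjoint)
    then show ?thesis using v0 f0 finV finF by simp
  qed
  have "card I \<le> card T"
  proof (rule family_bound[OF finI finT])
    fix i assume "i \<in> I"
    then show "X i \<in> FV.span T" using W(1) hv_span dl_span by (auto simp: I_def X_def)
  next
    fix c assume z: "\<And>d. (\<Sum>i\<in>I. c i * X i d) = 0"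
    have zF: "c (Some (Inr f)) = 0" if f: "f \<in> ?F" "f \<noteq> f0" for f
    proof -
      have fin_f: "finite f" using face_sub[OF sg rs f(1)] by simp
      have "0 = (\<Sum>x\<in>f. (\<Sum>i\<in>I. c i * X i x))" using z by simp
      also have "\<dots> = (\<Sum>i\<in>I. c i * (\<Sum>x\<in>f. X i x))"
        by (subst sum.swap) (simp add: sum_distrib_left)
      also have "\<dots> = (\<Sum>g\<in>?F-{f0}. c (Some (Inr g)) * (if f = g then 1 else 0))"
        unfolding split using hv_face[OF f] dl_face[OF f(1)] W(2)[OF _ f(1)] f(2) by (simp add: X_def)
      also have "\<dots> = c (Some (Inr f))" using f finF by (simp add: if_distrib[of "\<lambda>x. c _ * x"] sum.delta cong: if_cong)
      finally show ?thesis by simp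
    qed
    define P where "P u = (\<Sum>v\<in>V-{v0}. c (Some (Inl v)) * (if u = v then 1 else 0))" for u
    have z2: "c None * hv x + (if x \<in> ?D then P (snd x) - P (fst x) else 0) = 0" for x
    proof -
      have "0 = (\<Sum>i\<in>I. c i * X i x)" using z by simp
      also have "\<dots> = c None * hv x + (\<Sum>v\<in>V-{v0}. c (Some (Inl v)) * dl (\<lambda>u. if u = v then 1 else 0) x)"
        unfolding split using zF by (simp add: X_def)
      also have "(\<Sum>v\<in>V-{v0}. c (Some (Inl v)) * dl (\<lambda>u. if u = v then 1 else 0) x) = (if x \<in> ?D then P (snd x) - P (fst x) else 0)"
        by (simp add: dl_def P_def right_diff_distrib sum_subtractf)
      finally show ?thesis by simp
    qed
    have cN: "c None = 0"
    proof (rule ccontr)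
      assume cn: "c None \<noteq> 0"
      have "\<forall>u v. E u v \<longrightarrow> h (u,v) = (\<lambda>w. - P w / c None) v - (\<lambda>w. - P w / c None) u"
      proof (intro allI impI)
        fix u v assume "E u v"
        then have d: "(u,v) \<in> ?D" by (simp add: darts_def)
        have "c None * h (u,v) + (P v - P u) = 0" using z2[of "(u,v)"] d by (simp add: hv_def)
        then show "h (u,v) = (\<lambda>w. - P w / c None) v - (\<lambda>w. - P w / c None) u"
          using cn by (simp add: field_simps)
      qed
      then have "\<exists>p. \<forall>u v. E u v \<longrightarrow> h (u,v) = p v - p u"
        by (intro exI[of _ "\<lambda>w. - P w / c None"]) simp
      then show False using nop by simp
    qed
    have Pe: "P (snd x) = P (fst x)" if "x \<in> ?D" for x using z2[of x] that cN by simp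
    have Pc: "P v = P v0" if "v \<in> V" for v
    proof -
      have "E\<^sup>*\<^sup>* v0 v" using cg v0 that by (auto simp: connected_graph_def)
      then show ?thesis
      proof (induct rule: rtranclp_induct)
        case (step y z)
        then show ?case using Pe[of "(y,z)"] by (simp add: darts_def)
      qed simp
    qed
    have P0: "P v0 = 0" unfolding P_def by (rule sum.neutral) auto
    have Pv: "P v = c (Some (Inl v))" if "v \<in> V - {v0}" for v
      using that finV by (simp add: P_def if_distrib[of "\<lambda>x. c _ * x"] sum.delta' cong: if_cong)
    show "\<forall>i\<in>I. c i = 0"
    proof
      fix i assume "i \<in> I"
      then show "c i = 0" unfolding I_def using cN zF Pv Pc P0 by auto
    qed
  qed
  then have "card I \<le> card Dp" using cardT by simp
  moreover have "card ?F \<ge> 1" using f0 finF by (simp add: Suc_le_eq card_gt_0_iff) blast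
  moreover have "card V \<ge> 1" using v0 finV by (simp add: Suc_le_eq card_gt_0_iff) blast
  moreover have "int (card ?D) div 2 = int (card Dp)" using cardD by simp
  ultimately show False using eul cardI by linarith
qed

lemma three_cases: "(x::3) = 0 \<or> x = 1 \<or> x = 2"
proof (cases x)
  case (of_int z)
  then have "z = 0 \<or> z = 1 \<or> z = 2" by auto
  then show ?thesis using of_int by auto
qed

lemma two_cases: "(x::2) = 0 \<or> x = 1"
proof (cases x)
  case (of_int z)
  then have "z = 0 \<or> z = 1" by auto
  then show ?thesis using of_int by auto
qed

definition bv :: "2 \<Rightarrow> int" where "bv x = (if x = 1 then 1 else 0)"

definition disp :: "3 \<Rightarrow> 2 \<Rightarrow> 2 \<Rightarrow> int \<times> int" where
 "disp dh a b = (if dh = 1 then (if a = b then (-1,-1) else (bv a, bv b))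
                 else (if a = b then (1,1) else (- bv a, - bv b)))"

lemma K1: assumes "dh \<noteq> 0" "(a,b) \<noteq> (0,0)"
  shows "of_int (fst (disp dh a b) + snd (disp dh a b)) = dh \<and> of_int (fst (disp dh a b)) = a
     \<and> of_int (snd (disp dh a b)) = b \<and>
     disp dh a b \<in> {(1,0), (-1,0), (0,1), (0,-1), (1,1), (-1,-1)}"
  using three_cases[of dh] two_cases[of a] two_cases[of b] assms
  by (auto simp: disp_def bv_def)

lemma K2: assumes "dh \<noteq> 0" "(a,b) \<noteq> (0,0)"
  shows "disp (-dh) (-a) (-b) = (- fst (disp dh a b), - snd (disp dh a b))"
  using three_cases[of dh] two_cases[of a] two_cases[of b] assms
  by (auto simp: disp_def bv_def)

lemma K3: assumes "dh1 \<noteq> 0" "dh2 \<noteq> 0" "dh1 + dh2 \<noteq> 0" "(a1,b1) \<noteq> (0,0)" "(a2,b2) \<noteq> (0,0)"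
  "(a1+a2,b1+b2) \<noteq> (0,0)"
  shows "fst (disp dh1 a1 b1) + fst (disp dh2 a2 b2) + fst (disp (-(dh1+dh2)) (-(a1+a2)) (-(b1+b2))) = 0
   \<and> snd (disp dh1 a1 b1) + snd (disp dh2 a2 b2) + snd (disp (-(dh1+dh2)) (-(a1+a2)) (-(b1+b2))) = 0"
  using three_cases[of dh1] three_cases[of dh2] two_cases[of a1] two_cases[of b1] two_cases[of a2] two_cases[of b2] assms
  by (auto simp: disp_def bv_def)

lemma K0: "\<exists>p::int\<times>int. T_hue p = h \<and> T_color p = c"
proof -
  obtain a b where c: "c = (a,b)" by (cases c)
  define hv :: int where "hv = (if h = 0 then 0 else if h = 1 then 1 else 2)"
  show ?thesis
    apply (rule exI[of _ "(3 * bv a + 4 * (hv - bv b), bv b)"])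
    using three_cases[of h] two_cases[of a] two_cases[of b]
    by (auto simp: T_hue_def T_color_def c hv_def bv_def)
qed

theorem theorem7:
  fixes V :: "'a set" and E :: "'a \<Rightarrow> 'a \<Rightarrow> bool"
    and \<psi> :: "'a \<Rightarrow> 3" and \<phi> :: "'a \<Rightarrow> 2 \<times> 2"
  assumes "patch V E" and "dappled V E \<psi> \<phi>"
  shows "\<exists>f. dappled_hom_to_T V E \<psi> \<phi> f"
proof -
  obtain \<sigma> f0' where sg: "simple_graph V E" and cg: "connected_graph V E" and pm: "plane_map V E \<sigma>"
    and tri: "\<forall>f\<in>faces E \<sigma>. f \<noteq> f0' \<longrightarrow> card f = 3"
    using assms(1) by (auto simp: patch_def)
  have rs: "rotation_system E \<sigma>" using pm by (simp add: plane_map_def)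
  have pcH: "\<psi> u \<noteq> \<psi> v" if "E u v" for u v using assms(2) that by (auto simp: dappled_def proper_coloring_def)
  have pcC: "\<phi> u \<noteq> \<phi> v" if "E u v" for u v using assms(2) that by (auto simp: dappled_def proper_coloring_def)
  obtain v0 where v0: "v0 \<in> V" using cg by (auto simp: connected_graph_def)
  note finD = sg_D(1)[OF sg] and DV = sg_D(2)[OF sg] and symD = sg_D(3)[OF sg]
  note bf = rs_basic(1)[OF sg rs]
  have EV: "u \<in> V" "v \<in> V" if "E u v" for u v using that DV by (auto simp: darts_def)
  define dsp where "dsp u v = disp (\<psi> v - \<psi> u) (fst (\<phi> v) - fst (\<phi> u)) (snd (\<phi> v) - snd (\<phi> u))" for u v
  have nz: "\<psi> v - \<psi> u \<noteq> 0 \<and> (fst (\<phi> v) - fst (\<phi> u), snd (\<phi> v) - snd (\<phi> u)) \<noteq> (0,0)" if "E u v" for u v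
    using pcH[OF that] pcC[OF that] by (auto simp: prod_eq_iff)
  have dK1: "of_int (fst (dsp u v) + snd (dsp u v)) = \<psi> v - \<psi> u \<and> of_int (fst (dsp u v)) = fst (\<phi> v) - fst (\<phi> u)
     \<and> of_int (snd (dsp u v)) = snd (\<phi> v) - snd (\<phi> u) \<and>
     dsp u v \<in> {(1,0), (-1,0), (0,1), (0,-1), (1,1), (-1,-1)}" if "E u v" for u v
    unfolding dsp_def using K1 nz[OF that] by blast
  have danti: "dsp v u = (- fst (dsp u v), - snd (dsp u v))" if "E u v" for u v
    using K2[of "\<psi> v - \<psi> u" "fst (\<phi> v) - fst (\<phi> u)" "snd (\<phi> v) - snd (\<phi> u)"] nz[OF that]
    by (simp add: dsp_def)
  define h1 where "h1 d = real_of_int (fst (dsp (fst d) (snd d)))" for d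
  define h2 where "h2 d = real_of_int (snd (dsp (fst d) (snd d)))" for d
  have tsum: "(\<Sum>d\<in>g. h1 d) = 0 \<and> (\<Sum>d\<in>g. h2 d) = 0" if g: "g \<in> faces E \<sigma>" "card g = 3" for g
  proof -
    let ?p = "face_map \<sigma>"
    obtain d0 where d0: "d0 \<in> darts E" "g = orb ?p d0" using g by (auto simp: faces_def)
    have ot: "(?p ^^ 3) d0 = d0 \<and> g = {d0, ?p d0, ?p (?p d0)} \<and> d0 \<noteq> ?p d0 \<and> d0 \<noteq> ?p (?p d0) \<and> ?p d0 \<noteq> ?p (?p d0)"
      using orb_tri[OF bf finD d0(1)] g(2) d0(2) by simp
    have d1: "?p d0 \<in> darts E" using rs_basic(3)[OF sg rs d0(1)] .
    have d2: "?p (?p d0) \<in> darts E" using rs_basic(3)[OF sg rs d1] .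
    obtain u v where uv: "d0 = (u,v)" by (cases d0)
    obtain w where w: "?p d0 = (v,w)" using rs_basic(2)[OF sg rs d0(1)] uv by (cases "?p d0") auto
    obtain x where x: "?p (?p d0) = (w,x)" using rs_basic(2)[OF sg rs d1] w by (cases "?p (?p d0)") auto
    have "(?p ^^ 3) d0 = ?p (?p (?p d0))" by (simp add: numeral_3_eq_3)
    then have "fst ((?p ^^ 3) d0) = x" using rs_basic(2)[OF sg rs d2] x by simp
    then have xu: "x = u" using ot uv by simp
    have Euv: "E u v" "E v w" "E w u" using d0(1) d1 d2 uv w x xu by (auto simp: darts_def)
    have gg: "g = {(u,v), (v,w), (w,u)}" and dist: "(u,v) \<noteq> (v,w)" "(u,v) \<noteq> (w,u)" "(v,w) \<noteq> (w,u)"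
      using ot uv w x xu by auto
    have e1: "- ((\<psi> v - \<psi> u) + (\<psi> w - \<psi> v)) = \<psi> u - \<psi> w" by (simp add: algebra_simps)
    have e2: "- ((fst (\<phi> v) - fst (\<phi> u)) + (fst (\<phi> w) - fst (\<phi> v))) = fst (\<phi> u) - fst (\<phi> w)" by (simp add: algebra_simps)
    have e3: "- ((snd (\<phi> v) - snd (\<phi> u)) + (snd (\<phi> w) - snd (\<phi> v))) = snd (\<phi> u) - snd (\<phi> w)" by (simp add: algebra_simps)
    have s1: "(\<psi> v - \<psi> u) + (\<psi> w - \<psi> v) \<noteq> 0" using pcH[OF Euv(3)] by (simp add: algebra_simps)
    have s2: "((fst (\<phi> v) - fst (\<phi> u)) + (fst (\<phi> w) - fst (\<phi> v)), (snd (\<phi> v) - snd (\<phi> u)) + (snd (\<phi> w) - snd (\<phi> v))) \<noteq> (0,0)"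
      using pcC[OF Euv(3)] by (simp add: algebra_simps prod_eq_iff)
    have k3: "fst (dsp u v) + fst (dsp v w) + fst (dsp w u) = 0 \<and> snd (dsp u v) + snd (dsp v w) + snd (dsp w u) = 0"
      using K3[OF conjunct1[OF nz[OF Euv(1)]] conjunct1[OF nz[OF Euv(2)]] s1 conjunct2[OF nz[OF Euv(1)]] conjunct2[OF nz[OF Euv(2)]] s2]
      unfolding e1 e2 e3 dsp_def .
    have "(\<Sum>d\<in>g. h1 d) = h1 (u,v) + h1 (v,w) + h1 (w,u)" "(\<Sum>d\<in>g. h2 d) = h2 (u,v) + h2 (v,w) + h2 (w,u)"
      using dist unfolding gg by (simp_all add: add.assoc)
    moreover have "h1 (u,v) + h1 (v,w) + h1 (w,u) = 0" "h2 (u,v) + h2 (v,w) + h2 (w,u) = 0"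
      using k3 unfolding h1_def h2_def by (simp_all only: fst_conv snd_conv of_int_add[symmetric])
    ultimately show ?thesis by simp
  qed
  have pot: "\<exists>p1 p2 :: 'a \<Rightarrow> real. \<forall>u v. E u v \<longrightarrow> h1 (u,v) = p1 v - p1 u \<and> h2 (u,v) = p2 v - p2 u"
  proof (cases "darts E = {}")
    case True
    then have "\<not> E u v" for u v by (auto simp: darts_def)
    then show ?thesis by auto
  next
    case False
    have eul: "int (card V) - int (card (darts E)) div 2 + int (card (faces E \<sigma>)) = 2"
      using pm False by (simp add: plane_map_def)
    obtain d1 where d1: "d1 \<in> darts E" using False by auto
    define F0 where "F0 = (if f0' \<in> faces E \<sigma> then f0' else orb (face_map \<sigma>) d1)"
    have "orb (face_map \<sigma>) d1 \<in> faces E \<sigma>" using d1 unfolding faces_def by blast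
    then have F0: "F0 \<in> faces E \<sigma>" by (simp add: F0_def)
    have c3: "card g = 3" if "g \<in> faces E \<sigma>" "g \<noteq> F0" for g
      using tri that by (auto simp: F0_def split: if_splits)
    have a1: "h1 (v,u) = - h1 (u,v)" "h2 (v,u) = - h2 (u,v)" if "E u v" for u v
      using danti[OF that] by (simp_all add: h1_def h2_def)
    obtain p1 where p1: "\<forall>u v. E u v \<longrightarrow> h1 (u,v) = p1 v - p1 u"
      using core[OF sg cg rs eul F0, of h1] a1(1) tsum c3 by blast
    obtain p2 where p2: "\<forall>u v. E u v \<longrightarrow> h2 (u,v) = p2 v - p2 u"
      using core[OF sg cg rs eul F0, of h2] a1(2) tsum c3 by blast
    show ?thesis using p1 p2 by blast
  qed
  then obtain p1 p2 :: "'a \<Rightarrow> real" where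
    pp: "\<And>u v. E u v \<Longrightarrow> h1 (u,v) = p1 v - p1 u \<and> h2 (u,v) = p2 v - p2 u" by blast
  obtain p0 where p0: "T_hue p0 = \<psi> v0" "T_color p0 = \<phi> v0" using K0 by blast
  have intp: "(\<exists>k. p1 v - p1 v0 = of_int k) \<and> (\<exists>k. p2 v - p2 v0 = of_int k)" if "v \<in> V" for v
  proof -
    have "E\<^sup>*\<^sup>* v0 v" using cg v0 that by (auto simp: connected_graph_def)
    then show ?thesis
    proof (induct rule: rtranclp_induct)
      case base
      then show ?case by (auto intro: exI[of _ 0])
    next
      case (step y z)
      then obtain k1 k2 where k: "p1 y - p1 v0 = of_int k1" "p2 y - p2 v0 = of_int k2" by blast
      have "p1 z - p1 v0 = of_int (k1 + fst (dsp y z))" "p2 z - p2 v0 = of_int (k2 + snd (dsp y z))"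
        using pp[OF step(2)] k by (auto simp: h1_def h2_def algebra_simps)
      then show ?case by blast
    qed
  qed
  define F where "F v = (fst p0 + \<lfloor>p1 v - p1 v0\<rfloor>, snd p0 + \<lfloor>p2 v - p2 v0\<rfloor>)" for v
  have Fd: "fst (F v) - fst (F u) = fst (dsp u v) \<and> snd (F v) - snd (F u) = snd (dsp u v)" if e: "E u v" for u v
  proof -
    obtain a1 a2 where a: "p1 u - p1 v0 = of_int a1" "p2 u - p2 v0 = of_int a2" using intp EV(1)[OF e] by blast
    obtain b1 b2 where b: "p1 v - p1 v0 = of_int b1" "p2 v - p2 v0 = of_int b2" using intp EV(2)[OF e] by blast
    have "real_of_int (fst (dsp u v)) = of_int b1 - of_int a1" "real_of_int (snd (dsp u v)) = of_int b2 - of_int a2"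
      using pp[OF e] a b by (auto simp: h1_def h2_def algebra_simps)
    then have "fst (dsp u v) = b1 - a1" "snd (dsp u v) = b2 - a2" by linarith+
    then show ?thesis using a b by (simp add: F_def)
  qed
  have FV: "T_hue (F v) = \<psi> v \<and> T_color (F v) = \<phi> v" if "v \<in> V" for v
  proof -
    have "E\<^sup>*\<^sup>* v0 v" using cg v0 that by (auto simp: connected_graph_def)
    then show ?thesis
    proof (induct rule: rtranclp_induct)
      case base
      have "F v0 = p0" by (simp add: F_def)
      then show ?case using p0 by simp
    next
      case (step y z)
      have fz: "fst (F z) = fst (F y) + fst (dsp y z)" "snd (F z) = snd (F y) + snd (dsp y z)"
        using Fd[OF step(2)] by auto
      note k = dK1[OF step(2)]
      have "T_hue (F z) = T_hue (F y) + of_int (fst (dsp y z) + snd (dsp y z))"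
        unfolding T_hue_def fz by (simp add: algebra_simps)
      also have "\<dots> = \<psi> z" using step(3) k by simp
      finally have H: "T_hue (F z) = \<psi> z" .
      have "T_color (F z) = (fst (T_color (F y)) + of_int (fst (dsp y z)), snd (T_color (F y)) + of_int (snd (dsp y z)))"
        unfolding T_color_def fz by simp
      also have "\<dots> = \<phi> z" using step(3) k by (simp add: prod_eq_iff)
      finally show ?case using H by simp
    qed
  qed
  have "dappled_hom_to_T V E \<psi> \<phi> F"
    unfolding dappled_hom_to_T_def
  proof (intro conjI allI impI ballI)
    fix u v assume e: "E u v"
    have "(fst (F v) - fst (F u), snd (F v) - snd (F u)) = dsp u v" using Fd[OF e] by (simp add: prod_eq_iff)
    then show "T_adj (F u) (F v)" using dK1[OF e] unfolding T_adj_def by simp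
  qed (use FV in auto)
  then show ?thesis by blast
qed
end
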